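(* If $\delta$ is a small perturbation of the DR data $(L,b)\underset{p}{\overset{i}{\rightleftarrows}}(M,b),\ h$, then the perturbed data $(L,b_1)\underset{p_1}{\overset{i_1}{\rightleftarrows}}(M,b+\delta),\ h_1$ is a DR if and only if $p\,(A h^{2} A + A h + h A)\,i = 0$.
   Context: An HE data (homotopy equivalence data) consists of two (co)chain complexes $(L,b)$, $(M,b)$, quasi-isomorphisms $i:L\to M$ and $p:M\to L$, and a homotopy $h$ on $M$ with $ip = 1 + bh + hb$. A DR (deformation retract) is an HE data which in addition satisfies $pi = 1$. A perturbation $\delta$ is a map on $M$ of the same degree as $b$ with $(b+\delta)^2=0$; it is small if $1-\delta h$ is invertible. In that case $A=(1-\delta h)^{-1}\delta$, and the perturbed data is $i_1 = i + hAi$, $p_1 = p + pAh$, $h_1 = h + hAh$, $b_1 = b + pAi$ (which is again an HE data by the main perturbation lemma). *)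

theory Defs
  imports Main
begin

text \<open>Complexes are modelled as abelian groups (Z-modules) with a square-zero
additive endomorphism (differential); all maps are additive. Maps are plain
HOL functions, composition is function composition.\<close>

definition additive :: "('a::ab_group_add \<Rightarrow> 'b::ab_group_add) \<Rightarrow> bool" where
  "additive f \<longleftrightarrow> (\<forall>x y. f (x + y) = f x + f y)"

definition is_differential :: "('a::ab_group_add \<Rightarrow> 'a) \<Rightarrow> bool" where
  "is_differential b \<longleftrightarrow> additive b \<and> (\<forall>x. b (b x) = 0)"

definition chain_map :: "('a::ab_group_add \<Rightarrow> 'a) \<Rightarrow> ('b::ab_group_add \<Rightarrow> 'b) \<Rightarrow> ('a \<Rightarrow> 'b) \<Rightarrow> bool" where
  "chain_map bL bM f \<longleftrightarrow> additive f \<and> (\<forall>x. f (bL x) = bM (f x))"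

text \<open>Quasi-isomorphism: a chain map inducing a bijection ker b / im b on homology
(injectivity and surjectivity of the induced map written out).\<close>
definition quasi_iso :: "('a::ab_group_add \<Rightarrow> 'a) \<Rightarrow> ('b::ab_group_add \<Rightarrow> 'b) \<Rightarrow> ('a \<Rightarrow> 'b) \<Rightarrow> bool" where
  "quasi_iso bL bM f \<longleftrightarrow> chain_map bL bM f
     \<and> (\<forall>z. bL z = 0 \<and> (\<exists>y. f z = bM y) \<longrightarrow> (\<exists>x. z = bL x))
     \<and> (\<forall>w. bM w = 0 \<longrightarrow> (\<exists>z. bL z = 0 \<and> (\<exists>y. f z - w = bM y)))"

definition HE_data :: "('l::ab_group_add \<Rightarrow> 'l) \<Rightarrow> ('m::ab_group_add \<Rightarrow> 'm) \<Rightarrow>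
    ('l \<Rightarrow> 'm) \<Rightarrow> ('m \<Rightarrow> 'l) \<Rightarrow> ('m \<Rightarrow> 'm) \<Rightarrow> bool" where
  "HE_data bL bM i p h \<longleftrightarrow> is_differential bL \<and> is_differential bM
     \<and> quasi_iso bL bM i \<and> quasi_iso bM bL p \<and> additive h
     \<and> (\<forall>x. i (p x) = x + bM (h x) + h (bM x))"

definition DR_data :: "('l::ab_group_add \<Rightarrow> 'l) \<Rightarrow> ('m::ab_group_add \<Rightarrow> 'm) \<Rightarrow>
    ('l \<Rightarrow> 'm) \<Rightarrow> ('m \<Rightarrow> 'l) \<Rightarrow> ('m \<Rightarrow> 'm) \<Rightarrow> bool" where
  "DR_data bL bM i p h \<longleftrightarrow> HE_data bL bM i p h \<and> (\<forall>x. p (i x) = x)"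

definition perturbation :: "('m::ab_group_add \<Rightarrow> 'm) \<Rightarrow> ('m \<Rightarrow> 'm) \<Rightarrow> bool" where
  "perturbation bM \<delta> \<longleftrightarrow> additive \<delta> \<and> is_differential (\<lambda>x. bM x + \<delta> x)"

definition small_perturbation :: "('m::ab_group_add \<Rightarrow> 'm) \<Rightarrow> ('m \<Rightarrow> 'm) \<Rightarrow> ('m \<Rightarrow> 'm) \<Rightarrow> bool" where
  "small_perturbation bM h \<delta> \<longleftrightarrow> perturbation bM \<delta> \<and> bij (\<lambda>x. x - \<delta> (h x))"

definition pert_A :: "('m::ab_group_add \<Rightarrow> 'm) \<Rightarrow> ('m \<Rightarrow> 'm) \<Rightarrow> 'm \<Rightarrow> 'm" where
  "pert_A h \<delta> = (\<lambda>x. inv (\<lambda>y. y - \<delta> (h y)) (\<delta> x))"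

definition pert_i :: "('l \<Rightarrow> 'm::ab_group_add) \<Rightarrow> ('m \<Rightarrow> 'm) \<Rightarrow> ('m \<Rightarrow> 'm) \<Rightarrow> 'l \<Rightarrow> 'm" where
  "pert_i i h \<delta> = (\<lambda>x. i x + h (pert_A h \<delta> (i x)))"

definition pert_p :: "('m::ab_group_add \<Rightarrow> 'l::ab_group_add) \<Rightarrow> ('m \<Rightarrow> 'm) \<Rightarrow> ('m \<Rightarrow> 'm) \<Rightarrow> 'm \<Rightarrow> 'l" where
  "pert_p p h \<delta> = (\<lambda>x. p x + p (pert_A h \<delta> (h x)))"

definition pert_h :: "('m::ab_group_add \<Rightarrow> 'm) \<Rightarrow> ('m \<Rightarrow> 'm) \<Rightarrow> 'm \<Rightarrow> 'm" where
  "pert_h h \<delta> = (\<lambda>x. h x + h (pert_A h \<delta> (h x)))"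

definition pert_bL :: "('l::ab_group_add \<Rightarrow> 'l) \<Rightarrow> ('l \<Rightarrow> 'm::ab_group_add) \<Rightarrow> ('m \<Rightarrow> 'l)
    \<Rightarrow> ('m \<Rightarrow> 'm) \<Rightarrow> ('m \<Rightarrow> 'm) \<Rightarrow> 'l \<Rightarrow> 'l" where
  "pert_bL bL i p h \<delta> = (\<lambda>x. bL x + p (pert_A h \<delta> (i x)))"

end

theory Submission
  imports Defs
begin

lemma addD:
  assumes "additive f"
  shows "f (x + y) = f x + f y" "f 0 = 0" "f (- x) = - f x" "f (x - y) = f x - f y"
proof -
  show a: "f (x + y) = f x + f y" for x y using assms unfolding additive_def by blast
  have "f 0 = f 0 + f 0" using a[of 0 0] by simp
  then show z: "f 0 = 0" by simp
  have n: "f (- x) = - f x" for x using a[of x "- x"] z by (metis add.right_inverse minus_unique)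
  show "f (- x) = - f x" by (rule n)
  show "f (x - y) = f x - f y" using a[of x "- y"] n[of y] by simp
qed

lemma qiso:
  assumes dL: "is_differential bL" and dM: "is_differential bM"
    and cf: "chain_map bL bM f" and cg: "chain_map bM bL g"
    and gf: "\<forall>x. g (f x) = x"
    and fg: "\<forall>x. f (g x) = x + bM (H x) + H (bM x)"
    and aH: "additive H"
  shows "quasi_iso bL bM f \<and> quasi_iso bM bL g"
proof -
  have aL: "additive bL" and aM: "additive bM" using dL dM unfolding is_differential_def by auto
  have af: "additive f" and fc: "\<And>x. f (bL x) = bM (f x)" using cf unfolding chain_map_def by auto
  have ag: "additive g" and gc: "\<And>x. g (bM x) = bL (g x)" using cg unfolding chain_map_def by auto
  have q1: "quasi_iso bL bM f"
    unfolding quasi_iso_def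
  proof (intro conjI allI impI)
    show "chain_map bL bM f" by fact
    fix z assume "bL z = 0 \<and> (\<exists>y. f z = bM y)"
    then obtain y where "f z = bM y" by auto
    then have "z = bL (g y)" using gf gc by metis
    then show "\<exists>x. z = bL x" by blast
  next
    fix w assume w: "bM w = 0"
    have "bL (g w) = 0" using gc[of w] w addD(2)[OF ag] by simp
    moreover have "f (g w) - w = bM (H w)" using fg w addD(2)[OF aH] by simp
    ultimately show "\<exists>z. bL z = 0 \<and> (\<exists>y. f z - w = bM y)" by blast
  qed
  have q2: "quasi_iso bM bL g"
    unfolding quasi_iso_def
  proof (intro conjI allI impI)
    show "chain_map bM bL g" by fact
    fix z assume "bM z = 0 \<and> (\<exists>y. g z = bL y)"
    then obtain y where z0: "bM z = 0" and y: "g z = bL y" by auto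
    have "f (g z) = z + bM (H z)" using fg z0 addD(2)[OF aH] by simp
    then have "z = bM (f y) - bM (H z)" using y fc by (metis add_diff_cancel_right')
    then have "z = bM (f y - H z)" using addD(4)[OF aM] by simp
    then show "\<exists>x. z = bM x" by blast
  next
    fix w assume w: "bL w = 0"
    have "bM (f w) = 0" using fc[of w] w addD(2)[OF af] by simp
    moreover have "g (f w) - w = bL 0" using gf addD(2)[OF aL] by simp
    ultimately show "\<exists>z. bM z = 0 \<and> (\<exists>y. g z - w = bL y)" by blast
  qed
  show ?thesis using q1 q2 by blast
qed

lemma lin: "(a::'a::ab_group_add) - c = d + e \<Longrightarrow> d = 0 \<Longrightarrow> e = 0 \<Longrightarrow> a = c"
  by simp

lemma lin3: "(a::'a::ab_group_add) - c = d + e + f \<Longrightarrow> d = 0 \<Longrightarrow> e = 0 \<Longrightarrow> f = 0 \<Longrightarrow> a = c"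
  by simp

theorem mainTheorem2:
  fixes bL :: "'l::ab_group_add \<Rightarrow> 'l" and bM :: "'m::ab_group_add \<Rightarrow> 'm"
    and i :: "'l \<Rightarrow> 'm" and p :: "'m \<Rightarrow> 'l" and h :: "'m \<Rightarrow> 'm" and \<delta> :: "'m \<Rightarrow> 'm"
  assumes "DR_data bL bM i p h"
    and "small_perturbation bM h \<delta>"
  shows "DR_data (pert_bL bL i p h \<delta>) (\<lambda>x. bM x + \<delta> x)
            (pert_i i h \<delta>) (pert_p p h \<delta>) (pert_h h \<delta>)
         \<longleftrightarrow> (\<forall>x. p (pert_A h \<delta> (h (h (pert_A h \<delta> (i x))))
                     + pert_A h \<delta> (h (i x)) + h (pert_A h \<delta> (i x))) = 0)"
proof -
  define b where "b = bM"
  define A where "A = pert_A h \<delta>"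
  define X where "X = (\<lambda>y. y - \<delta> (h y))"
  have dL: "is_differential bL" and dM: "is_differential b"
    and ci: "chain_map bL b i" and cp: "chain_map b bL p" and ah: "additive h"
    and ip: "\<And>x. i (p x) = x + b (h x) + h (b x)" and pi: "\<And>x. p (i x) = x"
    using assms(1) unfolding DR_data_def HE_data_def quasi_iso_def b_def by auto
  have ad: "additive \<delta>" and dbd: "is_differential (\<lambda>x. b x + \<delta> x)" and bX: "bij X"
    using assms(2) unfolding small_perturbation_def perturbation_def b_def X_def by auto
  have aL: "additive bL" and ab: "additive b" and bb: "\<And>x. b (b x) = 0"
    using dL dM unfolding is_differential_def by auto
  have ai: "additive i" and ic: "\<And>x. i (bL x) = b (i x)" using ci unfolding chain_map_def by auto
  have ap: "additive p" and pc: "\<And>x. p (b x) = bL (p x)" using cp unfolding chain_map_def by auto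
  note adds = addD[OF aL] addD[OF ab] addD[OF ai] addD[OF ap] addD[OF ah] addD[OF ad]
  have bd: "b (\<delta> x) + \<delta> (b x) + \<delta> (\<delta> x) = 0" for x
  proof -
    have "b (b x + \<delta> x) + \<delta> (b x + \<delta> x) = 0" using dbd unfolding is_differential_def by auto
    then show ?thesis by (simp add: adds bb algebra_simps)
  qed
  have XA: "A x - \<delta> (h (A x)) = \<delta> x" for x
    unfolding A_def pert_A_def using surj_f_inv_f[OF bij_is_surj[OF bX]] unfolding X_def by metis
  have Xinj: "u = v" if "u - \<delta> (h u) = v - \<delta> (h v)" for u v
    using injD[OF bij_is_inj[OF bX]] that unfolding X_def by blast
  have aA: "additive A" unfolding additive_def
  proof (intro allI)
    fix x y
    show "A (x + y) = A x + A y"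
    proof (rule Xinj)
      have "(A x + A y) - \<delta> (h (A x + A y)) = (A x - \<delta> (h (A x))) + (A y - \<delta> (h (A y)))"
        by (simp add: adds algebra_simps)
      also have "\<dots> = \<delta> (x + y)" by (simp add: XA adds)
      finally show "A (x + y) - \<delta> (h (A (x + y))) = A x + A y - \<delta> (h (A x + A y))"
        by (simp add: XA)
    qed
  qed
  note addA = addD[OF aA]
  have A1: "A x = \<delta> x + \<delta> (h (A x))" for x using XA[of x] by (simp add: algebra_simps)
  have A2: "A x = \<delta> x + A (h (\<delta> x))" for x
  proof (rule Xinj)
    have "(\<delta> x + A (h (\<delta> x))) - \<delta> (h (\<delta> x + A (h (\<delta> x))))
        = \<delta> x - \<delta> (h (\<delta> x)) + (A (h (\<delta> x)) - \<delta> (h (A (h (\<delta> x)))))"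
      by (simp add: adds algebra_simps)
    also have "\<dots> = \<delta> x" by (simp only: XA) simp
    finally show "A x - \<delta> (h (A x)) = \<delta> x + A (h (\<delta> x)) - \<delta> (h (\<delta> x + A (h (\<delta> x))))"
      by (simp add: XA)
  qed
  define K where "K v = b (A v) + A (b v) + A (A v) + A (b (h (A v))) + A (h (b (A v)))" for v
  have K0': "K (z - h (\<delta> z)) = 0" for z
  proof -
    have Av: "A (z - h (\<delta> z)) = \<delta> z" using A2[of z] by (simp add: addA algebra_simps)
    define w where "w = b z + \<delta> z + h (b (\<delta> z))"
    have "K (z - h (\<delta> z)) = b (\<delta> z) + A w"
      unfolding K_def Av w_def by (simp add: adds addA algebra_simps)
    moreover have "(b (\<delta> z) + A w) - \<delta> (h (b (\<delta> z) + A w)) = 0 - \<delta> (h 0)"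
    proof -
      have "(b (\<delta> z) + A w) - \<delta> (h (b (\<delta> z) + A w)) = b (\<delta> z) - \<delta> (h (b (\<delta> z))) + (A w - \<delta> (h (A w)))"
        by (simp add: adds algebra_simps)
      also have "\<dots> = b (\<delta> z) + \<delta> (b z) + \<delta> (\<delta> z)" unfolding XA w_def by (simp add: adds)
      finally have "(b (\<delta> z) + A w) - \<delta> (h (b (\<delta> z) + A w)) = b (\<delta> z) + \<delta> (b z) + \<delta> (\<delta> z)" .
      moreover have "0 - \<delta> (h 0) = 0" by (simp add: adds)
      ultimately show ?thesis using bd[of z] by metis
    qed
    ultimately show ?thesis using Xinj by metis
  qed
  have K0: "K v = 0" for v
  proof -
    have "v = (v + h (A v)) - h (\<delta> (v + h (A v)))"
      using arg_cong[OF A1[of v], of h] by (simp add: adds algebra_simps)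
    then show ?thesis using K0'[of "v + h (A v)"] by metis
  qed
  have K0e: "b (A v) + A (b v) + A (A v) + A (b (h (A v))) + A (h (b (A v))) = 0" for v
    using K0[of v] unfolding K_def .
  have A1e: "A x - \<delta> x - \<delta> (h (A x)) = 0" for x using A1[of x] by (metis diff_diff_eq right_minus_eq)
  have A2e: "A x - \<delta> x - A (h (\<delta> x)) = 0" for x using A2[of x] by (metis diff_diff_eq right_minus_eq)
  define i1 where "i1 = pert_i i h \<delta>"
  define p1 where "p1 = pert_p p h \<delta>"
  define h1 where "h1 = pert_h h \<delta>"
  define b1 where "b1 = pert_bL bL i p h \<delta>"
  have i1e: "i1 x = i x + h (A (i x))" for x unfolding i1_def pert_i_def A_def ..
  have p1e: "p1 x = p x + p (A (h x))" for x unfolding p1_def pert_p_def A_def ..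
  have h1e: "h1 x = h x + h (A (h x))" for x unfolding h1_def pert_h_def A_def ..
  have b1e: "b1 x = bL x + p (A (i x))" for x unfolding b1_def pert_bL_def A_def ..
  have pc': "bL (p x) = p (b x)" for x using pc by simp
  have ai1: "additive i1" unfolding additive_def i1e by (simp add: adds addA)
  have ap1: "additive p1" unfolding additive_def p1e by (simp add: adds addA)
  have ah1: "additive h1" unfolding additive_def h1e by (simp add: adds addA)
  have ab1: "additive b1" unfolding additive_def b1e by (simp add: adds addA)
  have abd: "additive (\<lambda>x. b x + \<delta> x)" using dbd unfolding is_differential_def by simp
  have db1: "is_differential b1" unfolding is_differential_def
  proof (intro conjI allI)
    show "additive b1" by fact
    fix x
    show "b1 (b1 x) = 0"
    proof (rule lin)
      show "b1 (b1 x) - 0 = p (K (i x)) + bL (bL x)"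
        unfolding b1e K_def by (simp add: adds addA pc' ic ip algebra_simps)
    qed (use K0 aL bb dL in \<open>simp_all add: adds is_differential_def\<close>)
  qed
  have ci1: "chain_map b1 (\<lambda>x. b x + \<delta> x) i1" unfolding chain_map_def
  proof (intro conjI allI)
    show "additive i1" by fact
    fix x
    show "i1 (b1 x) = b (i1 x) + \<delta> (i1 x)"
    proof (rule lin)
      show "i1 (b1 x) - (b (i1 x) + \<delta> (i1 x)) = (A (i x) - \<delta> (i x) - \<delta> (h (A (i x)))) + h (K (i x))"
        unfolding b1e i1e K_def by (simp add: adds addA pc' ic ip algebra_simps)
    qed (simp_all add: A1e K0 adds)
  qed
  have cp1: "chain_map (\<lambda>x. b x + \<delta> x) b1 p1" unfolding chain_map_def
  proof (intro conjI allI)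
    show "additive p1" by fact
    fix x
    show "p1 (b x + \<delta> x) = b1 (p1 x)"
    proof (rule lin)
      show "p1 (b x + \<delta> x) - b1 (p1 x) = (- p (A x - \<delta> x - A (h (\<delta> x)))) + (- p (K (h x)))"
        unfolding b1e p1e K_def by (simp add: adds addA pc' ic ip algebra_simps)
    qed (simp_all add: A2e K0 adds)
  qed
  have hom: "i1 (p1 x) = x + (b (h1 x) + \<delta> (h1 x)) + h1 (b x + \<delta> x)" for x
  proof (rule lin3)
    show "i1 (p1 x) - (x + (b (h1 x) + \<delta> (h1 x)) + h1 (b x + \<delta> x))
       = (A (h x) - \<delta> (h x) - \<delta> (h (A (h x)))) + h (A x - \<delta> x - A (h (\<delta> x))) + h (K (h x))"
      unfolding p1e i1e h1e K_def by (simp add: adds addA pc' ic ip algebra_simps)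
  qed (simp_all add: A1e A2e K0 adds)
  have p1i1: "p1 (i1 x) = x + p (A (h (h (A (i x)))) + A (h (i x)) + h (A (i x)))" for x
    unfolding p1e i1e by (simp add: adds addA pi algebra_simps)
  have "DR_data b1 (\<lambda>x. b x + \<delta> x) i1 p1 h1 \<longleftrightarrow>
        (\<forall>x. p (A (h (h (A (i x)))) + A (h (i x)) + h (A (i x))) = 0)"
  proof
    assume "DR_data b1 (\<lambda>x. b x + \<delta> x) i1 p1 h1"
    then have "p1 (i1 x) = x" for x unfolding DR_data_def by blast
    then show "\<forall>x. p (A (h (h (A (i x)))) + A (h (i x)) + h (A (i x))) = 0" using p1i1 by simp
  next
    assume "\<forall>x. p (A (h (h (A (i x)))) + A (h (i x)) + h (A (i x))) = 0"
    then have pi1: "\<forall>x. p1 (i1 x) = x" using p1i1 by simp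
    have q: "quasi_iso b1 (\<lambda>x. b x + \<delta> x) i1 \<and> quasi_iso (\<lambda>x. b x + \<delta> x) b1 p1"
      by (rule qiso[OF db1 dbd ci1 cp1 pi1 _ ah1]) (use hom in simp)
    show "DR_data b1 (\<lambda>x. b x + \<delta> x) i1 p1 h1"
      unfolding DR_data_def HE_data_def using db1 dbd q ah1 hom pi1 by blast
  qed
  then show ?thesis unfolding b_def A_def i1_def p1_def h1_def b1_def .
qed

end
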